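(* Let $f$ be a Boolean function over $X$ and $T$ a vtree over $X$. Then every TDD respecting $T$ and computing $f$ has, for every node $t$ of $T$, at least $S_t$ $t$-nodes, where $S_t$ is the number of distinct non-trivial $X_t$-subfunctions of $f$.
   Context: For $Y\subseteq X$ and $\tau\in 2^Y$, $f[\tau]$ is the Boolean function over $X\setminus Y$ mapping $\sigma$ to $f(\sigma\times\tau)$. The $Y$-subfunctions of $f$ are the functions $f[\tau]$ for $\tau\in 2^Y$ (distinct functions counted once); a subfunction is non-trivial if it has at least one model. A vtree over $X$ is a rooted tree whose internal nodes have exactly two ordered children and whose leaves are labeled bijectively by $X$; $X_t$ is the set of variables below node $t$. An nTDD $C=(N,E)$ respecting $T$ has nodes $N=\biguplus_t N_t$ ($t$-nodes); leaf $t$-nodes (leaf labeled $x$) carry a label in $\{x,\neg x,1,0\}$ and compute that literal/constant; an internal $t$-node $g$ with children $t_1,t_2$ has inputs $E(g)\subseteq N_{t_1}\times N_{t_2}$ and computes $f_g=\bigvee_{(g_1,g_2)\in E(g)}(f_{g_1}\wedge f_{g_2})$ over $X_t$; the distinguished root-node $\mathrm{out}$ gives $f_C=f_{\mathrm{out}}$. A TDD is an nTDD such that for every leaf $t$ labeled $x$, $N_t$ has at most one node labeled $x$, at most one labeled $\neg x$, at most one labeled $1$, and if one is labeled $1$ all others are labeled $0$; and for every internal $t$, distinct $t$-nodes have disjoint input sets. *)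

theory Defs
  imports Main
begin

(* Assignments are total maps 'x => bool; a Boolean function over X is a map
   on assignments that only depends on the values of the variables in X. *)
type_synonym 'x assignment = "'x \<Rightarrow> bool"
type_synonym 'x boolfun = "'x assignment \<Rightarrow> bool"

definition depends_only :: "'x boolfun \<Rightarrow> 'x set \<Rightarrow> bool" where
  "depends_only f X \<longleftrightarrow> (\<forall>\<sigma> \<sigma>'. (\<forall>x\<in>X. \<sigma> x = \<sigma>' x) \<longrightarrow> f \<sigma> = f \<sigma>')"

definition combine :: "'x set \<Rightarrow> 'x assignment \<Rightarrow> 'x assignment \<Rightarrow> 'x assignment" where
  "combine Y \<sigma> \<tau> = (\<lambda>x. if x \<in> Y then \<tau> x else \<sigma> x)"

definition subfun :: "'x boolfun \<Rightarrow> 'x set \<Rightarrow> 'x assignment \<Rightarrow> 'x boolfun" where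
  "subfun f Y \<tau> = (\<lambda>\<sigma>. f (combine Y \<sigma> \<tau>))"

definition subfunctions :: "'x boolfun \<Rightarrow> 'x set \<Rightarrow> 'x boolfun set" where
  "subfunctions f Y = {g. \<exists>\<tau>. g = subfun f Y \<tau>}"

definition nontrivial_subfunctions :: "'x boolfun \<Rightarrow> 'x set \<Rightarrow> 'x boolfun set" where
  "nontrivial_subfunctions f Y = {g \<in> subfunctions f Y. \<exists>\<sigma>. g \<sigma>}"

datatype 'x vtree = Leaf 'x | Node "'x vtree" "'x vtree"

fun leaves_list :: "'x vtree \<Rightarrow> 'x list" where
  "leaves_list (Leaf x) = [x]"
| "leaves_list (Node l r) = leaves_list l @ leaves_list r"

definition vars :: "'x vtree \<Rightarrow> 'x set" where
  "vars t = set (leaves_list t)"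

(* the nodes of a vtree, identified with the subtrees rooted at them
   (distinct nodes give distinct subtrees since leaf labels are distinct) *)
fun subtrees :: "'x vtree \<Rightarrow> 'x vtree set" where
  "subtrees (Leaf x) = {Leaf x}"
| "subtrees (Node l r) = insert (Node l r) (subtrees l \<union> subtrees r)"

definition vtree_over :: "'x set \<Rightarrow> 'x vtree \<Rightarrow> bool" where
  "vtree_over X T \<longleftrightarrow> distinct (leaves_list T) \<and> set (leaves_list T) = X"

(* labels of leaf nodes: Pos = x, Neg = \<not>x, One = 1, Zero = 0,
   where x is the variable labelling the vtree leaf *)
datatype lit = Pos | Neg | One | Zero

(* A circuit is given by: node set N, the vtree node vt g of which g is a
   t-node, leaf labels lab, inputs E, and the output node out. *)
definition nTDD ::
  "'x vtree \<Rightarrow> 'n set \<Rightarrow> ('n \<Rightarrow> 'x vtree) \<Rightarrow> ('n \<Rightarrow> lit) \<Rightarrow> ('n \<Rightarrow> ('n \<times> 'n) set) \<Rightarrow> 'n \<Rightarrow> bool"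
where
  "nTDD T N vt lab E out \<longleftrightarrow>
     finite N \<and>
     (\<forall>g\<in>N. vt g \<in> subtrees T) \<and>
     (\<forall>g\<in>N. \<forall>t1 t2. vt g = Node t1 t2 \<longrightarrow>
         E g \<subseteq> {(g1, g2). g1 \<in> N \<and> g2 \<in> N \<and> vt g1 = t1 \<and> vt g2 = t2}) \<and>
     out \<in> N \<and> vt out = T"

fun sem :: "('n \<Rightarrow> lit) \<Rightarrow> ('n \<Rightarrow> ('n \<times> 'n) set) \<Rightarrow> 'x vtree \<Rightarrow> 'n \<Rightarrow> 'x boolfun" where
  "sem lab E (Leaf x) g \<sigma> =
     (case lab g of Pos \<Rightarrow> \<sigma> x | Neg \<Rightarrow> \<not> \<sigma> x | One \<Rightarrow> True | Zero \<Rightarrow> False)"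
| "sem lab E (Node t1 t2) g \<sigma> =
     (\<exists>(g1, g2) \<in> E g. sem lab E t1 g1 \<sigma> \<and> sem lab E t2 g2 \<sigma>)"

definition node_fun :: "('n \<Rightarrow> 'x vtree) \<Rightarrow> ('n \<Rightarrow> lit) \<Rightarrow> ('n \<Rightarrow> ('n \<times> 'n) set) \<Rightarrow> 'n \<Rightarrow> 'x boolfun" where
  "node_fun vt lab E g = sem lab E (vt g) g"

definition tnodes :: "'n set \<Rightarrow> ('n \<Rightarrow> 'x vtree) \<Rightarrow> 'x vtree \<Rightarrow> 'n set" where
  "tnodes N vt t = {g \<in> N. vt g = t}"

definition TDD ::
  "'x vtree \<Rightarrow> 'n set \<Rightarrow> ('n \<Rightarrow> 'x vtree) \<Rightarrow> ('n \<Rightarrow> lit) \<Rightarrow> ('n \<Rightarrow> ('n \<times> 'n) set) \<Rightarrow> 'n \<Rightarrow> bool"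
where
  "TDD T N vt lab E out \<longleftrightarrow>
     nTDD T N vt lab E out \<and>
     (\<forall>x. Leaf x \<in> subtrees T \<longrightarrow>
        (\<forall>l \<in> {Pos, Neg, One}. card {g \<in> tnodes N vt (Leaf x). lab g = l} \<le> 1) \<and>
        (\<forall>g \<in> tnodes N vt (Leaf x). lab g = One \<longrightarrow>
           (\<forall>h \<in> tnodes N vt (Leaf x). h \<noteq> g \<longrightarrow> lab h = Zero))) \<and>
     (\<forall>t1 t2. Node t1 t2 \<in> subtrees T \<longrightarrow>
        (\<forall>g \<in> tnodes N vt (Node t1 t2). \<forall>h \<in> tnodes N vt (Node t1 t2).
           g \<noteq> h \<longrightarrow> E g \<inter> E h = {}))"

end

theory Submission
  imports Defs
begin

lemma subtrees_self: "t \<in> subtrees t"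
  by (cases t) auto

lemma subtrees_trans: "s \<in> subtrees t \<Longrightarrow> subtrees s \<subseteq> subtrees t"
  by (induction t) auto

lemma subtrees_distinct: "s \<in> subtrees t \<Longrightarrow> distinct (leaves_list t) \<Longrightarrow> distinct (leaves_list s)"
  by (induction t) auto

lemma sem_dep: "(\<forall>x\<in>vars t. \<sigma> x = \<sigma>' x) \<Longrightarrow> sem lab E t g \<sigma> = sem lab E t g \<sigma>'"
proof (induction t arbitrary: g)
  case (Leaf x)
  then show ?case by (simp add: vars_def split: lit.splits)
next
  case (Node l r)
  have "\<forall>x\<in>vars l. \<sigma> x = \<sigma>' x" "\<forall>x\<in>vars r. \<sigma> x = \<sigma>' x"
    using Node.prems by (auto simp: vars_def)
  then show ?case using Node.IH by fastforce
qed

lemma determ: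
  assumes tdd: "TDD T N vt lab E out"
  shows "t \<in> subtrees T \<Longrightarrow> g \<in> tnodes N vt t \<Longrightarrow> h \<in> tnodes N vt t
    \<Longrightarrow> sem lab E t g \<sigma> \<Longrightarrow> sem lab E t h \<sigma> \<Longrightarrow> g = h"
proof (induction t arbitrary: g h)
  case (Leaf x)
  have fin: "finite N" using tdd by (simp add: TDD_def nTDD_def)
  have c: "\<forall>l \<in> {Pos, Neg, One}. card {g \<in> tnodes N vt (Leaf x). lab g = l} \<le> 1"
    and o: "\<forall>g \<in> tnodes N vt (Leaf x). lab g = One \<longrightarrow>
           (\<forall>h \<in> tnodes N vt (Leaf x). h \<noteq> g \<longrightarrow> lab h = Zero)"
    using tdd Leaf.prems(1) by (auto simp: TDD_def)
  have same: "g = h" if "lab g = l" "lab h = l" "l \<in> {Pos, Neg, One}" for l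
  proof -
    have "finite {g \<in> tnodes N vt (Leaf x). lab g = l}" using fin by (simp add: tnodes_def)
    moreover have "card {g \<in> tnodes N vt (Leaf x). lab g = l} \<le> Suc 0" using c that by auto
    ultimately show ?thesis using card_le_Suc0_iff_eq Leaf.prems that by blast
  qed
  have sg: "lab g = Pos \<and> \<sigma> x \<or> lab g = Neg \<and> \<not> \<sigma> x \<or> lab g = One"
    using Leaf.prems(4) by (cases "lab g") auto
  have sh: "lab h = Pos \<and> \<sigma> x \<or> lab h = Neg \<and> \<not> \<sigma> x \<or> lab h = One"
    using Leaf.prems(5) by (cases "lab h") auto
  show ?case
  proof (rule ccontr)
    assume ne: "g \<noteq> h"
    have "lab g \<noteq> One"
    proof
      assume "lab g = One"
      hence "lab h = Zero" using o Leaf.prems(2,3) ne not_sym by metis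
      thus False using sh by simp
    qed
    moreover have "lab h \<noteq> One"
    proof
      assume "lab h = One"
      hence "lab g = Zero" using o Leaf.prems(2,3) ne not_sym by metis
      thus False using sg by simp
    qed
    ultimately have eqlab: "lab g = lab h" and mem: "lab g \<in> {Pos, Neg, One}"
      using sg sh by (cases "lab g"; cases "lab h"; simp)+
    have "g = h" by (rule same[OF refl eqlab[symmetric] mem])
    thus False using ne by contradiction
  qed
next
  case (Node l r)
  have lT: "l \<in> subtrees T" and rT: "r \<in> subtrees T"
    using subtrees_trans[OF Node.prems(1)] subtrees_self by auto
  have inc: "\<And>g. g \<in> tnodes N vt (Node l r) \<Longrightarrow>
     E g \<subseteq> {(g1, g2). g1 \<in> N \<and> g2 \<in> N \<and> vt g1 = l \<and> vt g2 = r}"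
    using tdd by (auto simp: TDD_def nTDD_def tnodes_def)
  obtain g1 g2 where g: "(g1,g2) \<in> E g" "sem lab E l g1 \<sigma>" "sem lab E r g2 \<sigma>"
    using Node.prems(4) by auto
  obtain h1 h2 where h: "(h1,h2) \<in> E h" "sem lab E l h1 \<sigma>" "sem lab E r h2 \<sigma>"
    using Node.prems(5) by auto
  have "g1 \<in> tnodes N vt l" "g2 \<in> tnodes N vt r"
    using inc[OF Node.prems(2)] g(1) by (auto simp: tnodes_def)
  moreover have "h1 \<in> tnodes N vt l" "h2 \<in> tnodes N vt r"
    using inc[OF Node.prems(3)] h(1) by (auto simp: tnodes_def)
  ultimately have "g1 = h1" "g2 = h2" using Node.IH lT rT g h by blast+
  hence "E g \<inter> E h \<noteq> {}" using g h by auto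
  moreover have "\<forall>g \<in> tnodes N vt (Node l r). \<forall>h \<in> tnodes N vt (Node l r).
           g \<noteq> h \<longrightarrow> E g \<inter> E h = {}" using tdd Node.prems(1) unfolding TDD_def by blast
  ultimately show ?case using Node.prems(2,3) by blast
qed

definition ctxP where
  "ctxP T N vt lab E out t \<longleftrightarrow> (\<exists>hh. (\<forall>\<sigma>. sem lab E T out \<sigma> =
      (\<exists>g \<in> tnodes N vt t. sem lab E t g \<sigma> \<and> hh g \<sigma>)) \<and>
     (\<forall>g \<sigma> \<sigma>'. (\<forall>x. x \<notin> vars t \<longrightarrow> \<sigma> x = \<sigma>' x) \<longrightarrow> hh g \<sigma> = hh g \<sigma>'))"

lemma ctx_step:
  assumes tdd: "TDD T N vt lab E out" and dist: "distinct (leaves_list T)"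
    and s: "Node l r \<in> subtrees T" and P: "ctxP T N vt lab E out (Node l r)"
  shows "ctxP T N vt lab E out l \<and> ctxP T N vt lab E out r"
proof -
  obtain hh where h1: "\<forall>\<sigma>. sem lab E T out \<sigma> =
      (\<exists>g \<in> tnodes N vt (Node l r). sem lab E (Node l r) g \<sigma> \<and> hh g \<sigma>)"
    and h2: "\<forall>g \<sigma> \<sigma>'. (\<forall>x. x \<notin> vars (Node l r) \<longrightarrow> \<sigma> x = \<sigma>' x) \<longrightarrow> hh g \<sigma> = hh g \<sigma>'"
    using P unfolding ctxP_def by blast
  have inc: "\<And>g. g \<in> tnodes N vt (Node l r) \<Longrightarrow>
     E g \<subseteq> {(g1, g2). g1 \<in> N \<and> g2 \<in> N \<and> vt g1 = l \<and> vt g2 = r}"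
    using tdd by (auto simp: TDD_def nTDD_def tnodes_def)
  have "distinct (leaves_list (Node l r))" using subtrees_distinct[OF s dist] .
  hence disj: "vars l \<inter> vars r = {}" by (simp add: vars_def)
  have L: "ctxP T N vt lab E out l"
    unfolding ctxP_def
  proof (intro exI conjI allI impI)
    fix \<sigma>
    show "sem lab E T out \<sigma> = (\<exists>g1 \<in> tnodes N vt l. sem lab E l g1 \<sigma> \<and>
       (\<exists>g \<in> tnodes N vt (Node l r). \<exists>g2. (g1,g2) \<in> E g \<and> sem lab E r g2 \<sigma> \<and> hh g \<sigma>))"
    proof
      assume "sem lab E T out \<sigma>"
      then obtain g g1 g2 where g: "g \<in> tnodes N vt (Node l r)" "(g1,g2) \<in> E g"
        "sem lab E l g1 \<sigma>" "sem lab E r g2 \<sigma>" "hh g \<sigma>" using h1 by auto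
      have "g1 \<in> tnodes N vt l" using inc[OF g(1)] g(2) by (auto simp: tnodes_def)
      then show "\<exists>g1 \<in> tnodes N vt l. sem lab E l g1 \<sigma> \<and>
       (\<exists>g \<in> tnodes N vt (Node l r). \<exists>g2. (g1,g2) \<in> E g \<and> sem lab E r g2 \<sigma> \<and> hh g \<sigma>)"
        using g by blast
    next
      assume "\<exists>g1 \<in> tnodes N vt l. sem lab E l g1 \<sigma> \<and>
       (\<exists>g \<in> tnodes N vt (Node l r). \<exists>g2. (g1,g2) \<in> E g \<and> sem lab E r g2 \<sigma> \<and> hh g \<sigma>)"
      then obtain g g1 g2 where g: "g \<in> tnodes N vt (Node l r)" "(g1,g2) \<in> E g"
        "sem lab E l g1 \<sigma>" "sem lab E r g2 \<sigma>" "hh g \<sigma>" by blast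
      have "sem lab E (Node l r) g \<sigma>" using g by auto
      then show "sem lab E T out \<sigma>" using h1 g by blast
    qed
  next
    fix g1 and \<sigma> \<sigma>' :: "'a assignment"
    assume a: "\<forall>x. x \<notin> vars l \<longrightarrow> \<sigma> x = \<sigma>' x"
    have "\<forall>x\<in>vars r. \<sigma> x = \<sigma>' x"
    proof
      fix x assume "x \<in> vars r"
      hence "x \<notin> vars l" using disj by auto
      thus "\<sigma> x = \<sigma>' x" using a by simp
    qed
    hence "\<And>g2. sem lab E r g2 \<sigma> = sem lab E r g2 \<sigma>'" by (rule sem_dep)
    moreover have "\<forall>x. x \<notin> vars (Node l r) \<longrightarrow> \<sigma> x = \<sigma>' x" using a by (auto simp: vars_def)
    hence "\<And>g. hh g \<sigma> = hh g \<sigma>'" using h2 by blast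
    ultimately show "(\<exists>g \<in> tnodes N vt (Node l r). \<exists>g2. (g1,g2) \<in> E g \<and> sem lab E r g2 \<sigma> \<and> hh g \<sigma>)
      = (\<exists>g \<in> tnodes N vt (Node l r). \<exists>g2. (g1,g2) \<in> E g \<and> sem lab E r g2 \<sigma>' \<and> hh g \<sigma>')"
      by simp
  qed
  have R: "ctxP T N vt lab E out r"
    unfolding ctxP_def
  proof (intro exI conjI allI impI)
    fix \<sigma>
    show "sem lab E T out \<sigma> = (\<exists>g2 \<in> tnodes N vt r. sem lab E r g2 \<sigma> \<and>
       (\<exists>g \<in> tnodes N vt (Node l r). \<exists>g1. (g1,g2) \<in> E g \<and> sem lab E l g1 \<sigma> \<and> hh g \<sigma>))"
    proof
      assume "sem lab E T out \<sigma>"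
      then obtain g g1 g2 where g: "g \<in> tnodes N vt (Node l r)" "(g1,g2) \<in> E g"
        "sem lab E l g1 \<sigma>" "sem lab E r g2 \<sigma>" "hh g \<sigma>" using h1 by auto
      have "g2 \<in> tnodes N vt r" using inc[OF g(1)] g(2) by (auto simp: tnodes_def)
      then show "\<exists>g2 \<in> tnodes N vt r. sem lab E r g2 \<sigma> \<and>
       (\<exists>g \<in> tnodes N vt (Node l r). \<exists>g1. (g1,g2) \<in> E g \<and> sem lab E l g1 \<sigma> \<and> hh g \<sigma>)"
        using g by blast
    next
      assume "\<exists>g2 \<in> tnodes N vt r. sem lab E r g2 \<sigma> \<and>
       (\<exists>g \<in> tnodes N vt (Node l r). \<exists>g1. (g1,g2) \<in> E g \<and> sem lab E l g1 \<sigma> \<and> hh g \<sigma>)"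
      then obtain g g1 g2 where g: "g \<in> tnodes N vt (Node l r)" "(g1,g2) \<in> E g"
        "sem lab E l g1 \<sigma>" "sem lab E r g2 \<sigma>" "hh g \<sigma>" by blast
      have "sem lab E (Node l r) g \<sigma>" using g by auto
      then show "sem lab E T out \<sigma>" using h1 g by blast
    qed
  next
    fix g2 and \<sigma> \<sigma>' :: "'a assignment"
    assume a: "\<forall>x. x \<notin> vars r \<longrightarrow> \<sigma> x = \<sigma>' x"
    have "\<forall>x\<in>vars l. \<sigma> x = \<sigma>' x"
    proof
      fix x assume "x \<in> vars l"
      hence "x \<notin> vars r" using disj by auto
      thus "\<sigma> x = \<sigma>' x" using a by simp
    qed
    hence "\<And>g1. sem lab E l g1 \<sigma> = sem lab E l g1 \<sigma>'" by (rule sem_dep)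
    moreover have "\<forall>x. x \<notin> vars (Node l r) \<longrightarrow> \<sigma> x = \<sigma>' x" using a by (auto simp: vars_def)
    hence "\<And>g. hh g \<sigma> = hh g \<sigma>'" using h2 by blast
    ultimately show "(\<exists>g \<in> tnodes N vt (Node l r). \<exists>g1. (g1,g2) \<in> E g \<and> sem lab E l g1 \<sigma> \<and> hh g \<sigma>)
      = (\<exists>g \<in> tnodes N vt (Node l r). \<exists>g1. (g1,g2) \<in> E g \<and> sem lab E l g1 \<sigma>' \<and> hh g \<sigma>')"
      by simp
  qed
  show ?thesis using L R by blast
qed

lemma ctx_all:
  assumes tdd: "TDD T N vt lab E out" and dist: "distinct (leaves_list T)"
  shows "T' \<in> subtrees T \<Longrightarrow> ctxP T N vt lab E out T' \<Longrightarrow> t \<in> subtrees T' \<Longrightarrow> ctxP T N vt lab E out t"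
proof (induction T' arbitrary: t)
  case (Leaf x)
  then show ?case by simp
next
  case (Node l r)
  have lr: "ctxP T N vt lab E out l \<and> ctxP T N vt lab E out r"
    using ctx_step[OF tdd dist Node.prems(1,2)] .
  have "l \<in> subtrees T" "r \<in> subtrees T"
    using subtrees_trans[OF Node.prems(1)] subtrees_self by auto
  then show ?case
  proof -
    have "t = Node l r \<or> t \<in> subtrees l \<or> t \<in> subtrees r" using Node.prems(3) by simp
    then show ?thesis
    proof (elim disjE)
      assume "t = Node l r" then show ?thesis using Node.prems(2) by simp
    next
      assume "t \<in> subtrees l" then show ?thesis using Node.IH(1) \<open>l \<in> subtrees T\<close> lr by blast
    next
      assume "t \<in> subtrees r" then show ?thesis using Node.IH(2) \<open>r \<in> subtrees T\<close> lr by blast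
    qed
  qed
qed

theorem theorem7:
  fixes X :: "'x set" and f :: "'x boolfun" and T :: "'x vtree"
    and N :: "'n set" and vt :: "'n \<Rightarrow> 'x vtree" and lab :: "'n \<Rightarrow> lit"
    and E :: "'n \<Rightarrow> ('n \<times> 'n) set" and out :: 'n
  assumes "depends_only f X"
    and "vtree_over X T"
    and "TDD T N vt lab E out"
    and "node_fun vt lab E out = f"
  shows "\<forall>t \<in> subtrees T.
           card (nontrivial_subfunctions f (vars t)) \<le> card (tnodes N vt t)"
proof
  fix t assume t: "t \<in> subtrees T"
  have tdd: "TDD T N vt lab E out" using assms(3) .
  have dist: "distinct (leaves_list T)" using assms(2) by (simp add: vtree_over_def)
  have outN: "out \<in> N" "vt out = T" and fin: "finite N"
    using tdd by (auto simp: TDD_def nTDD_def)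
  have fdef: "f = sem lab E T out" using assms(4) outN by (simp add: node_fun_def)
  have base: "ctxP T N vt lab E out T"
    unfolding ctxP_def
    by (rule exI[of _ "\<lambda>g \<sigma>. g = out"]) (use outN in \<open>auto simp: tnodes_def\<close>)
  have "ctxP T N vt lab E out t"
    using ctx_all[OF tdd dist subtrees_self base t] .
  then obtain hh where h0: "\<forall>\<sigma>. sem lab E T out \<sigma> =
      (\<exists>g \<in> tnodes N vt t. sem lab E t g \<sigma> \<and> hh g \<sigma>)"
    and h2: "\<forall>g \<sigma> \<sigma>'. (\<forall>x. x \<notin> vars t \<longrightarrow> \<sigma> x = \<sigma>' x) \<longrightarrow> hh g \<sigma> = hh g \<sigma>'"
    unfolding ctxP_def by blast
  have h1: "\<forall>\<sigma>. f \<sigma> =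
      (\<exists>g \<in> tnodes N vt t. sem lab E t g \<sigma> \<and> hh g \<sigma>)" using h0 fdef by simp
  have sub: "nontrivial_subfunctions f (vars t) \<subseteq> hh ` tnodes N vt t"
  proof
    fix \<phi> assume "\<phi> \<in> nontrivial_subfunctions f (vars t)"
    then obtain \<tau> \<sigma>0 where ph: "\<phi> = subfun f (vars t) \<tau>" and s0: "\<phi> \<sigma>0"
      by (auto simp: nontrivial_subfunctions_def subfunctions_def)
    have eq: "\<phi> \<sigma> = (\<exists>g \<in> tnodes N vt t. sem lab E t g \<tau> \<and> hh g \<sigma>)" for \<sigma>
    proof -
      have "\<And>g. sem lab E t g (combine (vars t) \<sigma> \<tau>) = sem lab E t g \<tau>"
        by (rule sem_dep) (simp add: combine_def)
      moreover have "\<And>g. hh g (combine (vars t) \<sigma> \<tau>) = hh g \<sigma>"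
        using h2 by (simp add: combine_def)
      ultimately show ?thesis using h1 ph by (simp add: subfun_def)
    qed
    obtain g0 where g0: "g0 \<in> tnodes N vt t" "sem lab E t g0 \<tau>"
      using eq s0 by blast
    have "\<phi> = hh g0"
    proof
      fix \<sigma>
      show "\<phi> \<sigma> = hh g0 \<sigma>"
      proof
        assume "\<phi> \<sigma>"
        then obtain g where g: "g \<in> tnodes N vt t" "sem lab E t g \<tau>" "hh g \<sigma>" using eq by blast
        have "g = g0" using determ[OF tdd t g(1) g0(1) g(2) g0(2)] .
        then show "hh g0 \<sigma>" using g by simp
      next
        assume "hh g0 \<sigma>"
        then show "\<phi> \<sigma>" using eq g0 by blast
      qed
    qed
    then show "\<phi> \<in> hh ` tnodes N vt t" using g0 by blast
  qed
  have ft: "finite (tnodes N vt t)" using fin by (simp add: tnodes_def)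
  have "card (nontrivial_subfunctions f (vars t)) \<le> card (hh ` tnodes N vt t)"
    using card_mono[OF finite_imageI[OF ft] sub] .
  also have "\<dots> \<le> card (tnodes N vt t)" by (rule card_image_le[OF ft])
  finally show "card (nontrivial_subfunctions f (vars t)) \<le> card (tnodes N vt t)" .
qed

end
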